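(* Let $G$ be a group, $a,b\in G$, and let $<$ be a bi-ordering of $G$ with $a>1$. Then $a^{b^2}(a^b)^{-1}a>1$ and $(a^{b^2})^{-1}a^ba^{-1}<1$.
   Context: Notation: $x^y=y^{-1}xy$. A bi-ordering is a strict total order on $G$ invariant under both left and right multiplication. *)

theory Defs
  imports "HOL-Algebra.Group"
begin

definition conjg :: "('a, 'b) monoid_scheme \<Rightarrow> 'a \<Rightarrow> 'a \<Rightarrow> 'a" where
  "conjg G x y = inv\<^bsub>G\<^esub> y \<otimes>\<^bsub>G\<^esub> x \<otimes>\<^bsub>G\<^esub> y"

definition bi_ordering :: "('a, 'b) monoid_scheme \<Rightarrow> ('a \<Rightarrow> 'a \<Rightarrow> bool) \<Rightarrow> bool" where
  "bi_ordering G lt \<longleftrightarrow>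
     (\<forall>x\<in>carrier G. \<not> lt x x) \<and>
     (\<forall>x\<in>carrier G. \<forall>y\<in>carrier G. \<forall>z\<in>carrier G. lt x y \<longrightarrow> lt y z \<longrightarrow> lt x z) \<and>
     (\<forall>x\<in>carrier G. \<forall>y\<in>carrier G. x = y \<or> lt x y \<or> lt y x) \<and>
     (\<forall>x\<in>carrier G. \<forall>y\<in>carrier G. \<forall>z\<in>carrier G.
        lt x y \<longrightarrow> lt (z \<otimes>\<^bsub>G\<^esub> x) (z \<otimes>\<^bsub>G\<^esub> y) \<and> lt (x \<otimes>\<^bsub>G\<^esub> z) (y \<otimes>\<^bsub>G\<^esub> z))"

end

theory Submission
  imports Defs
begin

lemma bo_facts:
  assumes "bi_ordering G lt"
  shows "\<And>x y z. x \<in> carrier G \<Longrightarrow> y \<in> carrier G \<Longrightarrow> z \<in> carrier G \<Longrightarrow> lt x y \<Longrightarrow> lt y z \<Longrightarrow> lt x z"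
    and "\<And>x y. x \<in> carrier G \<Longrightarrow> y \<in> carrier G \<Longrightarrow> x = y \<or> lt x y \<or> lt y x"
    and "\<And>x y z. x \<in> carrier G \<Longrightarrow> y \<in> carrier G \<Longrightarrow> z \<in> carrier G \<Longrightarrow> lt x y \<Longrightarrow> lt (z \<otimes>\<^bsub>G\<^esub> x) (z \<otimes>\<^bsub>G\<^esub> y)"
    and "\<And>x y z. x \<in> carrier G \<Longrightarrow> y \<in> carrier G \<Longrightarrow> z \<in> carrier G \<Longrightarrow> lt x y \<Longrightarrow> lt (x \<otimes>\<^bsub>G\<^esub> z) (y \<otimes>\<^bsub>G\<^esub> z)"
  using assms unfolding bi_ordering_def by blast+

theorem mainTheorem3:
  fixes G (structure) and lt :: "'a \<Rightarrow> 'a \<Rightarrow> bool" and a b :: 'a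
  assumes "group G" and "a \<in> carrier G" and "b \<in> carrier G"
    and "bi_ordering G lt"
    and "lt \<one> a"
  shows "lt \<one> (conjg G a (b \<otimes> b) \<otimes> inv (conjg G a b) \<otimes> a)
       \<and> lt (inv (conjg G a (b \<otimes> b)) \<otimes> conjg G a b \<otimes> inv a) \<one>"
proof -
  interpret group G by fact
  note tr = bo_facts(1)[OF assms(4)] and tri = bo_facts(2)[OF assms(4)]
    and ml = bo_facts(3)[OF assms(4)] and mr = bo_facts(4)[OF assms(4)]
  have ab: "a \<in> carrier G" "b \<in> carrier G" by fact+
  have pm: "lt \<one> (u \<otimes> v)" if "u \<in> carrier G" "v \<in> carrier G" "lt \<one> u" "lt \<one> v" for u v
  proof -
    have "lt (u \<otimes> \<one>) (u \<otimes> v)" using ml[of \<one> v u] that by simp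
    then have "lt u (u \<otimes> v)" using that by simp
    then show ?thesis using tr that by blast
  qed
  have cj: "lt (conjg G u g) (conjg G v g)" if "u \<in> carrier G" "v \<in> carrier G" "g \<in> carrier G" "lt u v" for u v g
    unfolding conjg_def using ml[of u v "inv g"] mr[of "inv g \<otimes> u" "inv g \<otimes> v" g] that by simp
  define x where "x = conjg G a b"
  define y where "y = conjg G x b"
  have xc: "x \<in> carrier G" and yc: "y \<in> carrier G" unfolding x_def y_def conjg_def using ab by auto
  have yeq: "conjg G a (b \<otimes> b) = y" unfolding y_def x_def conjg_def using ab
    by (simp add: inv_mult_group m_assoc)
  have c1: "conjg G \<one> b = \<one>" unfolding conjg_def using ab by simp
  have x1: "lt \<one> x" using cj[of \<one> a b] assms(5) ab c1 unfolding x_def by simp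
  have y1: "lt \<one> y" using cj[of \<one> x b] x1 xc ab c1 unfolding y_def by simp
  have A: "lt \<one> (y \<otimes> inv x \<otimes> a)"
  proof -
    consider "x = a" | "lt x a" | "lt a x" using tri xc ab by blast
    then show ?thesis
    proof cases
      case 1 then show ?thesis using y1 xc yc by (simp add: m_assoc)
    next
      case 2
      have "lt (inv x \<otimes> x) (inv x \<otimes> a)" using ml[of x a "inv x"] 2 xc ab by simp
      then have "lt \<one> (inv x \<otimes> a)" using xc by simp
      then show ?thesis using pm[of y "inv x \<otimes> a"] y1 xc yc ab by (simp add: m_assoc)
    next
      case 3
      have "lt (conjg G a b) (conjg G x b)" using cj[of a x b] 3 ab xc by simp
      then have "lt x y" unfolding x_def[symmetric] y_def .
      then have "lt (x \<otimes> inv x) (y \<otimes> inv x)" using mr[of x y "inv x"] xc yc by simp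
      then have "lt \<one> (y \<otimes> inv x)" using xc by simp
      then show ?thesis using pm[of "y \<otimes> inv x" a] assms(5) xc yc ab by simp
    qed
  qed
  have B: "lt \<one> (a \<otimes> inv x \<otimes> y)"
  proof -
    consider "x = a" | "lt x a" | "lt a x" using tri xc ab by blast
    then show ?thesis
    proof cases
      case 1 then show ?thesis using y1 xc yc by simp
    next
      case 2
      have "lt (x \<otimes> inv x) (a \<otimes> inv x)" using mr[of x a "inv x"] 2 xc ab by simp
      then have "lt \<one> (a \<otimes> inv x)" using xc by simp
      then show ?thesis using pm[of "a \<otimes> inv x" y] y1 xc yc ab by simp
    next
      case 3
      have "lt (conjg G a b) (conjg G x b)" using cj[of a x b] 3 ab xc by simp
      then have "lt x y" unfolding x_def[symmetric] y_def .
      then have "lt (inv x \<otimes> x) (inv x \<otimes> y)" using ml[of x y "inv x"] xc yc by simp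
      then have "lt \<one> (inv x \<otimes> y)" using xc by simp
      then show ?thesis using pm[of a "inv x \<otimes> y"] assms(5) xc yc ab by (simp add: m_assoc)
    qed
  qed
  define z where "z = a \<otimes> inv x \<otimes> y"
  have zc: "z \<in> carrier G" unfolding z_def using ab xc yc by simp
  have "lt (inv z \<otimes> \<one>) (inv z \<otimes> z)" using ml[of \<one> z "inv z"] B zc unfolding z_def[symmetric] by simp
  then have "lt (inv z) \<one>" using zc by simp
  moreover have "inv z = inv y \<otimes> x \<otimes> inv a" unfolding z_def using ab xc yc
    by (simp add: inv_mult_group m_assoc)
  ultimately show ?thesis using A yeq unfolding x_def by simp
qed

end
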